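(* Let $n\ge1$ and $P=\Phi^+(A_n)=\{(i,j)\colon1\le i,j\le n,\ i+j\ge n+1\}$. For $1\le i\le n$ let $\overline{R}_i\coloneqq\sum_{j'\ge n+1-i}T^-_{(i,j')}+\sum_{i'\ge i}T^-_{(i',n+1-i)}$ (sums over elements of $P$). Then \[\tfrac12\big(\overline{R}_1-\overline{R}_2+\overline{R}_3-\cdots+(-1)^{n-1}\overline{R}_n\big)\equiv^q\begin{cases}0&\text{if $n$ is even},\\ \frac{1}{q+1}&\text{if $n$ is odd}.\end{cases}\]
   Context: $P$ is ordered by $(i,j)\le(i',j')$ iff $i\le i'$ and $j\le j'$. $\mathcal{J}(P)$ is the set of order ideals. For $p\in P$, $I\in\mathcal{J}(P)$: $T_p^+(I)=1$ if $p$ is minimal in $P\setminus I$, else $0$; $T_p^-(I)=1$ if $p$ is maximal in $I$, else $0$; $T_p^q=T_p^+-qT_p^-$ with $q$ an indeterminate. For $f,g\colon\mathcal{J}(P)\to\mathbb{R}(q)$, $f\equiv^q g$ means $f-g=\sum_{p\in P}c_p(q)T_p^q$ for some $c_p(q)\in\mathbb{R}(q)$; an element of $\mathbb{R}(q)$ denotes a constant function. *)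

theory Defs
  imports "HOL-Computational_Algebra.Polynomial" "HOL-Computational_Algebra.Fraction_Field"
begin

type_synonym ratfun = "real poly fract"

definition qv :: ratfun where "qv = Fract [:0, 1:] 1"

definition ple :: "nat \<times> nat \<Rightarrow> nat \<times> nat \<Rightarrow> bool" where
  "ple p p' \<longleftrightarrow> fst p \<le> fst p' \<and> snd p \<le> snd p'"

definition posP :: "nat \<Rightarrow> (nat \<times> nat) set" where
  "posP n = {(i, j). 1 \<le> i \<and> i \<le> n \<and> 1 \<le> j \<and> j \<le> n \<and> n + 1 \<le> i + j}"

definition order_ideals :: "(nat \<times> nat) set \<Rightarrow> (nat \<times> nat) set set" where
  "order_ideals P = {I. I \<subseteq> P \<and> (\<forall>x\<in>I. \<forall>y\<in>P. ple y x \<longrightarrow> y \<in> I)}"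

definition Tplus :: "(nat \<times> nat) set \<Rightarrow> nat \<times> nat \<Rightarrow> (nat \<times> nat) set \<Rightarrow> ratfun" where
  "Tplus P p I = (if p \<in> P - I \<and> (\<forall>y\<in>P - I. ple y p \<longrightarrow> y = p) then 1 else 0)"

definition Tminus :: "(nat \<times> nat) set \<Rightarrow> nat \<times> nat \<Rightarrow> (nat \<times> nat) set \<Rightarrow> ratfun" where
  "Tminus P p I = (if p \<in> I \<and> (\<forall>y\<in>I. ple p y \<longrightarrow> y = p) then 1 else 0)"

definition Tq :: "(nat \<times> nat) set \<Rightarrow> nat \<times> nat \<Rightarrow> (nat \<times> nat) set \<Rightarrow> ratfun" where
  "Tq P p I = Tplus P p I - qv * Tminus P p I"

definition qequiv :: "(nat \<times> nat) set \<Rightarrow> ((nat \<times> nat) set \<Rightarrow> ratfun) \<Rightarrow> ((nat \<times> nat) set \<Rightarrow> ratfun) \<Rightarrow> bool" where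
  "qequiv P f g \<longleftrightarrow> (\<exists>c :: nat \<times> nat \<Rightarrow> ratfun.
      \<forall>I \<in> order_ideals P. f I - g I = (\<Sum>p\<in>P. c p * Tq P p I))"

definition Rbar :: "nat \<Rightarrow> nat \<Rightarrow> (nat \<times> nat) set \<Rightarrow> ratfun" where
  "Rbar n i I =
     (\<Sum>j' \<in> {j'. (i, j') \<in> posP n \<and> n + 1 - i \<le> j'}. Tminus (posP n) (i, j') I)
   + (\<Sum>i' \<in> {i'. (i', n + 1 - i) \<in> posP n \<and> i \<le> i'}. Tminus (posP n) (i', n + 1 - i) I)"

end

theory Submission
  imports Defs
begin


lemma down_interval:
  fixes S :: "nat set"
  assumes "finite S" "S \<subseteq> {L..}" "\<forall>x\<in>S. \<forall>y. L \<le> y \<and> y \<le> x \<longrightarrow> y \<in> S"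
  shows "S = {L..<L + card S}"
proof (cases "S = {}")
  case True then show ?thesis by simp
next
  case False
  define M where "M = Max S"
  have M: "M \<in> S" using False assms(1) by (simp add: M_def)
  have LM: "L \<le> M" using M assms(2) by auto
  have "S = {L..M}"
  proof
    show "S \<subseteq> {L..M}" using assms(1,2) by (auto simp: M_def)
    show "{L..M} \<subseteq> S" using M assms(3) by auto
  qed
  then show ?thesis using LM by auto
qed

definition arow :: "(nat \<times> nat) set \<Rightarrow> nat \<Rightarrow> nat" where
  "arow I i = card {j. (i, j) \<in> I}"

lemma ideal_sub: "I \<in> order_ideals P \<Longrightarrow> I \<subseteq> P"
  by (simp add: order_ideals_def)

lemma ideal_down: "I \<in> order_ideals P \<Longrightarrow> x \<in> I \<Longrightarrow> y \<in> P \<Longrightarrow> ple y x \<Longrightarrow> y \<in> I"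
  by (auto simp: order_ideals_def)

lemma mem_arow:
  assumes I: "I \<in> order_ideals (posP n)"
  shows "(i, j) \<in> I \<longleftrightarrow> (i, j) \<in> posP n \<and> j < n + 1 - i + arow I i"
proof -
  define S where "S = {j. (i, j) \<in> I}"
  have sub: "I \<subseteq> posP n" using ideal_sub[OF I] .
  have fin: "finite S"
  proof -
    have "S \<subseteq> {..n}" using sub by (auto simp: S_def posP_def)
    then show ?thesis using finite_subset by blast
  qed
  have S1: "S \<subseteq> {n + 1 - i..}" using sub by (auto simp: S_def posP_def)
  have S2: "\<forall>x\<in>S. \<forall>y. n + 1 - i \<le> y \<and> y \<le> x \<longrightarrow> y \<in> S"
  proof (intro ballI allI impI)
    fix x y assume x: "x \<in> S" and y: "n + 1 - i \<le> y \<and> y \<le> x"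
    have xP: "(i, x) \<in> posP n" using x sub by (auto simp: S_def)
    have "(i, y) \<in> posP n" using xP y by (auto simp: posP_def)
    moreover have "ple (i, y) (i, x)" using y by (simp add: ple_def)
    ultimately show "y \<in> S" using ideal_down[OF I] x by (auto simp: S_def)
  qed
  have eq: "S = {n + 1 - i..<n + 1 - i + card S}" by (rule down_interval[OF fin S1 S2])
  have "(i, j) \<in> I \<longleftrightarrow> j \<in> S" by (simp add: S_def)
  also have "\<dots> \<longleftrightarrow> n + 1 - i \<le> j \<and> j < n + 1 - i + arow I i"
    by (subst eq) (simp add: arow_def S_def)
  also have "\<dots> \<longleftrightarrow> (i, j) \<in> posP n \<and> j < n + 1 - i + arow I i"
  proof
    assume h: "n + 1 - i \<le> j \<and> j < n + 1 - i + arow I i"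
    then have "j \<in> {n + 1 - i..<n + 1 - i + card S}" by (simp add: arow_def S_def)
    then have "j \<in> S" using eq by blast
    then show "(i, j) \<in> posP n \<and> j < n + 1 - i + arow I i" using h sub by (auto simp: S_def)
  next
    assume "(i, j) \<in> posP n \<and> j < n + 1 - i + arow I i"
    then show "n + 1 - i \<le> j \<and> j < n + 1 - i + arow I i" by (auto simp: posP_def)
  qed
  finally show ?thesis .
qed

lemma arow_le:
  assumes I: "I \<in> order_ideals (posP n)"
  shows "arow I i \<le> i"
proof -
  have "{j. (i, j) \<in> I} \<subseteq> {n + 1 - i..n}" using ideal_sub[OF I] by (auto simp: posP_def)
  then have "arow I i \<le> card {n + 1 - i..n}" unfolding arow_def by (rule card_mono[rotated]) simp
  then show ?thesis by simp
qed

lemma arow_out: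
  assumes I: "I \<in> order_ideals (posP n)" and "i = 0 \<or> i > n"
  shows "arow I i = 0"
proof -
  have "{j. (i, j) \<in> I} = {}" using ideal_sub[OF I] assms(2) by (auto simp: posP_def)
  then show ?thesis by (simp add: arow_def)
qed

lemma arow_step:
  assumes I: "I \<in> order_ideals (posP n)"
  shows "arow I (Suc k) \<le> arow I k + 1"
proof (rule ccontr)
  assume c: "\<not> ?thesis"
  have k1: "1 \<le> k" using c arow_le[OF I, of "Suc k"] by (cases k) auto
  have kn: "Suc k \<le> n" using c arow_out[OF I, of "Suc k"] by (cases "Suc k \<le> n") auto
  define j where "j = n - k + arow I (Suc k) - 1"
  have "(Suc k, j) \<in> I" 
    using mem_arow[OF I, of "Suc k" j] arow_le[OF I, of "Suc k"] c k1 kn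
    by (auto simp: j_def posP_def)
  moreover have "(k, j) \<in> posP n" using c arow_le[OF I, of "Suc k"] k1 kn 
    by (auto simp: j_def posP_def)
  moreover have "ple (k, j) (Suc k, j)" by (simp add: ple_def)
  ultimately have "(k, j) \<in> I" using ideal_down[OF I] by blast
  then have "j < n + 1 - k + arow I k" using mem_arow[OF I] by blast
  then show False using c kn by (simp add: j_def)
qed



lemma Tminus_char:
  assumes I: "I \<in> order_ideals (posP n)" and p: "(i, j) \<in> posP n"
  shows "Tminus (posP n) (i, j) I =
    (if j + 1 = n + 1 - i + arow I i \<and> arow I (Suc i) \<le> arow I i then 1 else 0)"
proof -
  note mem = mem_arow[OF I]
  have ai: "arow I i \<le> i" by (rule arow_le[OF I])
  have pr: "1 \<le> i" "i \<le> n" "1 \<le> j" "j \<le> n" "n + 1 \<le> i + j" using p by (auto simp: posP_def)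
  have "(i, j) \<in> I \<and> (\<forall>y\<in>I. ple (i, j) y \<longrightarrow> y = (i, j)) \<longleftrightarrow>
        j + 1 = n + 1 - i + arow I i \<and> arow I (Suc i) \<le> arow I i" (is "?L \<longleftrightarrow> ?R")
  proof
    assume L: ?L
    have inI: "j < n + 1 - i + arow I i" using L mem by blast
    have r1: "j + 1 = n + 1 - i + arow I i"
    proof (rule ccontr)
      assume "\<not> ?thesis"
      then have "j + 1 < n + 1 - i + arow I i" using inI by simp
      then have "(i, j + 1) \<in> I" using mem pr ai by (auto simp: posP_def)
      moreover have "ple (i, j) (i, j + 1)" by (simp add: ple_def)
      ultimately show False using L by auto
    qed
    have r2: "arow I (Suc i) \<le> arow I i"
    proof (rule ccontr)
      assume c: "\<not> ?thesis"
      have "Suc i \<le> n" using c arow_out[OF I, of "Suc i"] by (cases "Suc i \<le> n") auto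
      then have "(Suc i, j) \<in> I" using mem pr c r1 by (auto simp: posP_def)
      moreover have "ple (i, j) (Suc i, j)" by (simp add: ple_def)
      ultimately show False using L by auto
    qed
    show ?R using r1 r2 by simp
  next
    assume R: ?R
    have inI: "(i, j) \<in> I" using R mem p by auto
    moreover have "\<forall>y\<in>I. ple (i, j) y \<longrightarrow> y = (i, j)"
    proof (intro ballI impI)
      fix y assume y: "y \<in> I" and le: "ple (i, j) y"
      obtain i' j' where yy: "y = (i', j')" by (cases y)
      have yP: "(i', j') \<in> posP n" using y yy ideal_sub[OF I] by auto
      show "y = (i, j)"
      proof (rule ccontr)
        assume ne: "y \<noteq> (i, j)"
        show False
        proof (cases "j < j'")
          case True
          have "(i, j + 1) \<in> posP n" using pr yP True by (auto simp: posP_def)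
          moreover have "ple (i, j + 1) y" using le True yy by (auto simp: ple_def)
          ultimately have "(i, j + 1) \<in> I" using ideal_down[OF I] y by blast
          then show False using mem R by auto
        next
          case False
          then have "i < i'" using le ne yy by (auto simp: ple_def)
          then have "(Suc i, j) \<in> posP n" using pr yP by (auto simp: posP_def)
          moreover have "ple (Suc i, j) y" using le \<open>i < i'\<close> yy by (auto simp: ple_def)
          ultimately have "(Suc i, j) \<in> I" using ideal_down[OF I] y by blast
          then show False using mem R pr by auto
        qed
      qed
    qed
    ultimately show ?L by blast
  qed
  then show ?thesis by (simp add: Tminus_def)
qed

lemma Tplus_char:
  assumes I: "I \<in> order_ideals (posP n)" and p: "(i, j) \<in> posP n"
  shows "Tplus (posP n) (i, j) I =
    (if j = n + 1 - i + arow I i \<and> (arow I i = 0 \<or> arow I i \<le> arow I (i - 1)) then 1 else 0)"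
proof -
  note mem = mem_arow[OF I]
  have ai: "arow I i \<le> i" by (rule arow_le[OF I])
  have pr: "1 \<le> i" "i \<le> n" "1 \<le> j" "j \<le> n" "n + 1 \<le> i + j" using p by (auto simp: posP_def)
  have "(i, j) \<in> posP n - I \<and> (\<forall>y\<in>posP n - I. ple y (i, j) \<longrightarrow> y = (i, j)) \<longleftrightarrow>
        j = n + 1 - i + arow I i \<and> (arow I i = 0 \<or> arow I i \<le> arow I (i - 1))" (is "?L \<longleftrightarrow> ?R")
  proof
    assume L: ?L
    have notI: "n + 1 - i + arow I i \<le> j" using L mem p by auto
    have r1: "j = n + 1 - i + arow I i"
    proof (rule ccontr)
      assume "\<not> ?thesis"
      then have "n + 1 - i + arow I i < j" using notI by simp
      then have "(i, j - 1) \<in> posP n - I" using mem pr by (auto simp: posP_def)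
      moreover have "ple (i, j - 1) (i, j)" by (simp add: ple_def)
      ultimately show False using L pr by fastforce
    qed
    have r2: "arow I i = 0 \<or> arow I i \<le> arow I (i - 1)"
    proof (rule ccontr)
      assume c: "\<not> ?thesis"
      have i2: "2 \<le> i" using c r1 pr ai by (cases "i = 1") auto
      have "(i - 1, j) \<in> posP n" using i2 pr r1 c by (auto simp: posP_def)
      moreover have "(i - 1, j) \<notin> I" using mem r1 c i2 by auto
      moreover have "ple (i - 1, j) (i, j)" by (simp add: ple_def)
      ultimately show False using L i2 by fastforce
    qed
    show ?R using r1 r2 by simp
  next
    assume R: ?R
    have nI: "(i, j) \<in> posP n - I" using R mem p by auto
    moreover have "\<forall>y\<in>posP n - I. ple y (i, j) \<longrightarrow> y = (i, j)"
    proof (intro ballI impI)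
      fix y assume y: "y \<in> posP n - I" and le: "ple y (i, j)"
      obtain i' j' where yy: "y = (i', j')" by (cases y)
      have yP: "(i', j') \<in> posP n" using y yy by auto
      show "y = (i, j)"
      proof (rule ccontr)
        assume ne: "y \<noteq> (i, j)"
        have a1: "arow I i \<ge> 1"
        proof (rule ccontr)
          assume "\<not> ?thesis"
          then have "j = n + 1 - i" using R by simp
          then show False using le ne yy yP pr by (auto simp: ple_def posP_def)
        qed
        show False
        proof (cases "j' < j")
          case True
          have "(i, j - 1) \<in> posP n" using pr R a1 by (auto simp: posP_def)
          moreover have "(i, j - 1) \<in> I" using mem calculation R a1 by auto
          moreover have "ple y (i, j - 1)" using le True yy by (auto simp: ple_def)
          ultimately have "y \<in> I" using ideal_down[OF I] y by blast
          then show False using y by blast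
        next
          case False
          then have ii: "i' < i" using le ne yy by (auto simp: ple_def)
          then have i2: "2 \<le> i" using yP by (auto simp: posP_def)
          have "(i - 1, j) \<in> posP n" using pr R a1 i2 by (auto simp: posP_def)
          moreover have "(i - 1, j) \<in> I" using mem calculation R a1 i2 pr by auto
          moreover have "ple y (i - 1, j)" using le ii yy by (auto simp: ple_def)
          ultimately have "y \<in> I" using ideal_down[OF I] y by blast
          then show False using y by blast
        qed
      qed
    qed
    ultimately show ?L by blast
  qed
  then show ?thesis by (simp add: Tplus_def)
qed



lemma posP_Sigma: "posP n = Sigma {1..n} (\<lambda>i. {n + 1 - i..n})"
  by (auto simp: posP_def)

lemma sum_posP: "(\<Sum>p\<in>posP n. f p) = (\<Sum>i=1..n. \<Sum>j=n + 1 - i..n. f (i, j))"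
  by (simp add: posP_Sigma sum.Sigma)

lemma rowsum_minus:
  assumes I: "I \<in> order_ideals (posP n)" and i: "1 \<le> i" "i \<le> n"
  shows "(\<Sum>j=n + 1 - i..n. (if odd (i + j + n) then (-1) ^ (i - 1) * Tminus (posP n) (i, j) I else 0))
    = (-1) ^ (i - 1) * (if 1 \<le> arow I i \<and> arow I (Suc i) \<le> arow I i \<and> odd (arow I i) then 1 else (0::ratfun))"
proof -
  have ai: "arow I i \<le> i" by (rule arow_le[OF I])
  have "(\<Sum>j=n + 1 - i..n. (if odd (i + j + n) then (-1) ^ (i - 1) * Tminus (posP n) (i, j) I else 0))
     = (\<Sum>j=n + 1 - i..n. (if j = n - i + arow I i then
          (-1) ^ (i - 1) * (if 1 \<le> arow I i \<and> arow I (Suc i) \<le> arow I i \<and> odd (arow I i) then 1 else (0::ratfun)) else 0))"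
  proof (rule sum.cong[OF refl])
    fix j assume j: "j \<in> {n + 1 - i..n}"
    then have jP: "(i, j) \<in> posP n" using i by (auto simp: posP_def)
    show "(if odd (i + j + n) then (-1) ^ (i - 1) * Tminus (posP n) (i, j) I else 0) =
      (if j = n - i + arow I i then
          (-1) ^ (i - 1) * (if 1 \<le> arow I i \<and> arow I (Suc i) \<le> arow I i \<and> odd (arow I i) then 1 else (0::ratfun)) else 0)"
    proof (cases "j = n - i + arow I i")
      case True
      have a1: "1 \<le> arow I i" using True j i by auto
      have par: "i + j + n = 2 * n + arow I i" using True i a1 by simp
      have T: "Tminus (posP n) (i, j) I = (if arow I (Suc i) \<le> arow I i then 1 else 0)"
      proof -
        have e: "j + 1 = n + 1 - i + arow I i" using True i a1 by linarith
        show ?thesis using Tminus_char[OF I jP] e by simp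
      qed
      have po: "odd (i + j + n) \<longleftrightarrow> odd (arow I i)" unfolding par by simp
      have L: "(if odd (i + j + n) then (-1) ^ (i - 1) * Tminus (posP n) (i, j) I else 0) =
          (-1) ^ (i - 1) * (if 1 \<le> arow I i \<and> arow I (Suc i) \<le> arow I i \<and> odd (arow I i) then 1 else (0::ratfun))"
        using T po a1 by simp
      show ?thesis using L True by simp
    next
      case False
      then have "j + 1 \<noteq> n + 1 - i + arow I i" using i by auto
      then show ?thesis using False by (simp add: Tminus_char[OF I jP])
    qed
  qed
  also have "\<dots> = (-1) ^ (i - 1) * (if 1 \<le> arow I i \<and> arow I (Suc i) \<le> arow I i \<and> odd (arow I i) then 1 else (0::ratfun))"
    using ai i by (auto simp: sum.delta)
  finally show ?thesis .
qed

lemma rowsum_plus: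
  assumes I: "I \<in> order_ideals (posP n)" and i: "1 \<le> i" "i \<le> n"
  shows "(\<Sum>j=n + 1 - i..n. (if odd (i + j + n) then (-1) ^ (i - 1) * Tplus (posP n) (i, j) I else 0))
    = (-1) ^ (i - 1) * (if arow I i < i \<and> (arow I i = 0 \<or> arow I i \<le> arow I (i - 1)) \<and> even (arow I i) then 1 else (0::ratfun))"
proof -
  have ai: "arow I i \<le> i" by (rule arow_le[OF I])
  have "(\<Sum>j=n + 1 - i..n. (if odd (i + j + n) then (-1) ^ (i - 1) * Tplus (posP n) (i, j) I else 0))
     = (\<Sum>j=n + 1 - i..n. (if j = n + 1 - i + arow I i then
          (-1) ^ (i - 1) * (if arow I i < i \<and> (arow I i = 0 \<or> arow I i \<le> arow I (i - 1)) \<and> even (arow I i) then 1 else (0::ratfun)) else 0))"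
  proof (rule sum.cong[OF refl])
    fix j assume j: "j \<in> {n + 1 - i..n}"
    then have jP: "(i, j) \<in> posP n" using i by (auto simp: posP_def)
    show "(if odd (i + j + n) then (-1) ^ (i - 1) * Tplus (posP n) (i, j) I else 0) =
      (if j = n + 1 - i + arow I i then
          (-1) ^ (i - 1) * (if arow I i < i \<and> (arow I i = 0 \<or> arow I i \<le> arow I (i - 1)) \<and> even (arow I i) then 1 else (0::ratfun)) else 0)"
    proof (cases "j = n + 1 - i + arow I i")
      case True
      have a1: "arow I i < i" using True j i by auto
      have par: "i + j + n = 2 * n + 1 + arow I i" using True i by simp
      have T: "Tplus (posP n) (i, j) I = (if arow I i = 0 \<or> arow I i \<le> arow I (i - 1) then 1 else 0)"
        using Tplus_char[OF I jP] True i by simp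
      have po: "odd (i + j + n) \<longleftrightarrow> even (arow I i)" unfolding par by simp
      have L: "(if odd (i + j + n) then (-1) ^ (i - 1) * Tplus (posP n) (i, j) I else 0) =
          (-1) ^ (i - 1) * (if arow I i < i \<and> (arow I i = 0 \<or> arow I i \<le> arow I (i - 1)) \<and> even (arow I i) then 1 else (0::ratfun))"
        using T po a1 by simp
      show ?thesis using L True by simp
    next
      case False
      then show ?thesis by (simp add: Tplus_char[OF I jP])
    qed
  qed
  also have "\<dots> = (-1) ^ (i - 1) * (if arow I i < i \<and> (arow I i = 0 \<or> arow I i \<le> arow I (i - 1)) \<and> even (arow I i) then 1 else (0::ratfun))"
    using ai i by (auto simp: sum.delta)
  finally show ?thesis .
qed

lemma kernel_nat:
  fixes a :: "nat \<Rightarrow> nat"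
  assumes "1 \<le> i" "a i \<le> i" "a (Suc i) \<le> a i + 1" "a i \<le> a (i - 1) + 1" "a (i - 1) \<le> i - 1"
  shows "(if 1 \<le> a i \<and> a (Suc i) \<le> a i \<and> odd (a i) then 1 else 0)
       + (if a i < i \<and> (a i = 0 \<or> a i \<le> a (i - 1)) \<and> even (a i) then 1 else 0)
       + (if 1 \<le> a i \<and> odd (a i) \<and> a (Suc i) = a i + 1 then 1 else 0)
       + (if 1 \<le> a (i - 1) \<and> odd (a (i - 1)) \<and> a i = a (i - 1) + 1 then 1 else 0) = (1::nat)"
  using assms by (auto split: if_splits) presburger+



lemma qv1_nz: "qv + 1 \<noteq> (0::ratfun)"
proof
  assume "qv + 1 = (0::ratfun)"
  then have "Fract ([:0, 1:] + 1) 1 = (Fract 0 1 :: ratfun)"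
    by (simp add: qv_def One_fract_def Zero_fract_def)
  then have "[:0, 1:] + 1 = (0 :: real poly)" by (simp add: eq_fract)
  then have "coeff ([:0, 1:] + 1) 1 = coeff (0 :: real poly) 1" by simp
  then show False by simp
qed

lemma telescope_gen:
  fixes F h :: "nat \<Rightarrow> ratfun"
  assumes h0: "h 0 = 0" and kk: "\<And>i. 1 \<le> i \<Longrightarrow> i \<le> n \<Longrightarrow> F i = 1 - h i - h (i - 1)"
    and m: "m \<le> n"
  shows "(\<Sum>i=1..m. (-1) ^ (i - 1) * F i) = (if odd m then 1 else 0) - (-1) ^ (m - 1) * h m"
  using m
proof (induction m)
  case 0
  then show ?case using h0 by simp
next
  case (Suc m)
  have IH: "(\<Sum>i=1..m. (-1) ^ (i - 1) * F i) = (if odd m then 1 else 0) - (-1) ^ (m - 1) * h m"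
    using Suc by simp
  have S: "(\<Sum>i=1..Suc m. (-1) ^ (i - 1) * F i) = (\<Sum>i=1..m. (-1) ^ (i - 1) * F i) + (-1) ^ m * F (Suc m)"
    by (simp add: sum.cl_ivl_Suc)
  have K: "F (Suc m) = 1 - h (Suc m) - h m" using kk[of "Suc m"] Suc.prems by simp
  show ?case
  proof (cases m)
    case 0
    then show ?thesis using S K IH h0 by simp
  next
    case (Suc m')
    define s :: ratfun where "s = (-1) ^ m'"
    have p1: "(-1) ^ m = - s" using Suc by (simp add: s_def)
    have p2: "(-1) ^ (m - 1) = s" using Suc by (simp add: s_def)
    have p3: "(if odd m then 1 else 0) - s = (if odd (Suc m) then 1 else (0::ratfun))"
      using Suc by (cases "even m'") (simp_all add: s_def)
    have "(\<Sum>i=1..Suc m. (-1) ^ (i - 1) * F i)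
        = ((if odd m then 1 else 0) - s * h m) + (- s) * (1 - h (Suc m) - h m)"
      unfolding S IH K p1 p2 ..
    also have "\<dots> = ((if odd m then 1 else 0) - s) + s * h (Suc m)" by (simp add: algebra_simps)
    also have "\<dots> = (if odd (Suc m) then 1 else 0) - (-1) ^ (Suc m - 1) * h (Suc m)"
      unfolding p3 using p1 by simp
    finally show ?thesis .

  qed
qed

lemma four_bool:
  "(if b1 then 1 else 0) + (if b2 then 1 else 0) + (if b3 then 1 else 0) + (if b4 then 1 else 0) = (1::nat)
   \<Longrightarrow> (if b1 then 1 else 0) + (if b2 then 1 else 0) = 1 - (if b3 then 1 else 0) - (if b4 then 1 else (0::ratfun))"
  by (cases b1; cases b2; cases b3; cases b4) simp_all

lemma Y:
  assumes I: "I \<in> order_ideals (posP n)"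
  shows "(\<Sum>p\<in>posP n. (if odd (fst p + snd p + n) then (-1) ^ (fst p - 1) * Tminus (posP n) p I else 0))
       + (\<Sum>p\<in>posP n. (if odd (fst p + snd p + n) then (-1) ^ (fst p - 1) * Tplus (posP n) p I else 0))
       = (if odd n then 1 else 0)"
proof -
  let ?a = "arow I"
  define F where "F i = (if 1 \<le> ?a i \<and> ?a (Suc i) \<le> ?a i \<and> odd (?a i) then 1 else 0)
     + (if ?a i < i \<and> (?a i = 0 \<or> ?a i \<le> ?a (i - 1)) \<and> even (?a i) then 1 else (0::ratfun))" for i
  define h where "h k = (if 1 \<le> ?a k \<and> odd (?a k) \<and> ?a (Suc k) = ?a k + 1 then 1 else (0::ratfun))" for k
  have "(\<Sum>p\<in>posP n. (if odd (fst p + snd p + n) then (-1) ^ (fst p - 1) * Tminus (posP n) p I else 0))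
       + (\<Sum>p\<in>posP n. (if odd (fst p + snd p + n) then (-1) ^ (fst p - 1) * Tplus (posP n) p I else 0))
     = (\<Sum>i=1..n. \<Sum>j=n + 1 - i..n. (if odd (i + j + n) then (-1) ^ (i - 1) * Tminus (posP n) (i, j) I else 0))
     + (\<Sum>i=1..n. \<Sum>j=n + 1 - i..n. (if odd (i + j + n) then (-1) ^ (i - 1) * Tplus (posP n) (i, j) I else 0))"
    by (simp only: sum_posP fst_conv snd_conv)
  also have "\<dots> = (\<Sum>i=1..n. (\<Sum>j=n + 1 - i..n. (if odd (i + j + n) then (-1) ^ (i - 1) * Tminus (posP n) (i, j) I else 0))
     + (\<Sum>j=n + 1 - i..n. (if odd (i + j + n) then (-1) ^ (i - 1) * Tplus (posP n) (i, j) I else 0)))"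
    by (rule sum.distrib[symmetric])
  also have "\<dots> = (\<Sum>i=1..n. (-1) ^ (i - 1) * F i)"
  proof (rule sum.cong[OF refl])
    fix i assume i: "i \<in> {1..n}"
    then have i1: "1 \<le> i" and i2: "i \<le> n" by auto
    show "(\<Sum>j=n + 1 - i..n. (if odd (i + j + n) then (-1) ^ (i - 1) * Tminus (posP n) (i, j) I else 0))
     + (\<Sum>j=n + 1 - i..n. (if odd (i + j + n) then (-1) ^ (i - 1) * Tplus (posP n) (i, j) I else 0))
      = (-1) ^ (i - 1) * F i"
      by (simp only: rowsum_minus[OF I i1 i2] rowsum_plus[OF I i1 i2] F_def distrib_left)
  qed
  also have "\<dots> = (if odd n then 1 else 0) - (-1) ^ (n - 1) * h n"
  proof (rule telescope_gen)
    show "h 0 = 0" by (simp add: h_def arow_out[OF I])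
    fix i assume i: "1 \<le> i" "i \<le> n"
    have "(if 1 \<le> ?a i \<and> ?a (Suc i) \<le> ?a i \<and> odd (?a i) then 1 else 0)
       + (if ?a i < i \<and> (?a i = 0 \<or> ?a i \<le> ?a (i - 1)) \<and> even (?a i) then 1 else 0)
       + (if 1 \<le> ?a i \<and> odd (?a i) \<and> ?a (Suc i) = ?a i + 1 then 1 else 0)
       + (if 1 \<le> ?a (i - 1) \<and> odd (?a (i - 1)) \<and> ?a i = ?a (i - 1) + 1 then 1 else 0) = (1::nat)"
    proof (rule kernel_nat)
      show "1 \<le> i" by fact
      show "?a i \<le> i" by (rule arow_le[OF I])
      show "?a (Suc i) \<le> ?a i + 1" by (rule arow_step[OF I])
      show "?a (i - 1) \<le> i - 1" by (rule arow_le[OF I])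
      show "?a i \<le> ?a (i - 1) + 1" using arow_step[OF I, of "i - 1"] i by simp
    qed
    note kf = this
    have si: "Suc (i - 1) = i" using i by simp
    show "F i = 1 - h i - h (i - 1)" unfolding F_def h_def si by (rule four_bool[OF kf])
  qed (rule order_refl)
  also have "\<dots> = (if odd n then 1 else 0)" by (simp add: h_def arow_out[OF I])
  finally show ?thesis .
qed



lemma col_reindex:
  "(\<Sum>p\<in>posP n. g p) = (\<Sum>i=1..n. \<Sum>i'=i..n. g (i', n + 1 - i))"
proof -
  have "(\<Sum>p\<in>posP n. g p) = (\<Sum>q\<in>Sigma {1..n} (\<lambda>i. {i..n}). (\<lambda>(i, i'). g (i', n + 1 - i)) q)"
    by (rule sum.reindex_bij_witness[where i = "\<lambda>(x, y). (y, n + 1 - x)" and j = "\<lambda>(a, b). (n + 1 - b, a)"])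
       (auto simp: posP_def)
  also have "\<dots> = (\<Sum>i=1..n. \<Sum>i'=i..n. g (i', n + 1 - i))" by (simp add: sum.Sigma)
  finally show ?thesis .
qed

lemma X:
  "(\<Sum>i=1..n. (-1) ^ (i - 1) * Rbar n i I)
   = 2 * (\<Sum>p\<in>posP n. (if odd (fst p + snd p + n) then (-1) ^ (fst p - 1) * Tminus (posP n) p I else 0))"
proof -
  let ?f = "\<lambda>p. Tminus (posP n) p I"
  have "(\<Sum>i=1..n. (-1) ^ (i - 1) * Rbar n i I)
     = (\<Sum>i=1..n. (-1) ^ (i - 1) * (\<Sum>j=n + 1 - i..n. ?f (i, j)) + (-1) ^ (i - 1) * (\<Sum>i'=i..n. ?f (i', n + 1 - i)))"
  proof (rule sum.cong[OF refl])
    fix i assume i: "i \<in> {1..n}"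
    have r: "{j'. (i, j') \<in> posP n \<and> n + 1 - i \<le> j'} = {n + 1 - i..n}"
      using i by (auto simp: posP_def)
    have c: "{i'. (i', n + 1 - i) \<in> posP n \<and> i \<le> i'} = {i..n}"
      using i by (auto simp: posP_def)
    show "(-1) ^ (i - 1) * Rbar n i I = (-1) ^ (i - 1) * (\<Sum>j=n + 1 - i..n. ?f (i, j)) + (-1) ^ (i - 1) * (\<Sum>i'=i..n. ?f (i', n + 1 - i))"
      unfolding Rbar_def r c by (simp add: distrib_left)
  qed
  also have "\<dots> = (\<Sum>i=1..n. (-1) ^ (i - 1) * (\<Sum>j=n + 1 - i..n. ?f (i, j)))
     + (\<Sum>i=1..n. (-1) ^ (i - 1) * (\<Sum>i'=i..n. ?f (i', n + 1 - i)))"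
    by (rule sum.distrib)
  also have "(\<Sum>i=1..n. (-1) ^ (i - 1) * (\<Sum>j=n + 1 - i..n. ?f (i, j)))
      = (\<Sum>p\<in>posP n. (-1) ^ (fst p - 1) * ?f p)"
    by (simp add: sum_posP sum_distrib_left)
  also have "(\<Sum>i=1..n. (-1) ^ (i - 1) * (\<Sum>i'=i..n. ?f (i', n + 1 - i)))
      = (\<Sum>p\<in>posP n. (-1) ^ (n - snd p) * ?f p)"
  proof -
    have "(\<Sum>i=1..n. (-1) ^ (i - 1) * (\<Sum>i'=i..n. ?f (i', n + 1 - i)))
        = (\<Sum>i=1..n. \<Sum>i'=i..n. (-1) ^ (n - (n + 1 - i)) * ?f (i', n + 1 - i))"
    proof (rule sum.cong[OF refl])
      fix i assume i: "i \<in> {1..n}"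
      then have "n - (n + 1 - i) = i - 1" by auto
      then show "(-1) ^ (i - 1) * (\<Sum>i'=i..n. ?f (i', n + 1 - i)) = (\<Sum>i'=i..n. (-1) ^ (n - (n + 1 - i)) * ?f (i', n + 1 - i))"
        by (simp add: sum_distrib_left)
    qed
    also have "\<dots> = (\<Sum>p\<in>posP n. (-1) ^ (n - snd p) * ?f p)"
      using col_reindex[of "\<lambda>p. (-1) ^ (n - snd p) * Tminus (posP n) p I" n] by simp
    finally show ?thesis .
  qed
  also have "(\<Sum>p\<in>posP n. (-1) ^ (fst p - 1) * ?f p) + (\<Sum>p\<in>posP n. (-1) ^ (n - snd p) * ?f p)
     = (\<Sum>p\<in>posP n. (-1) ^ (fst p - 1) * ?f p + (-1) ^ (n - snd p) * ?f p)"
    by (rule sum.distrib[symmetric])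
  also have "\<dots> = (\<Sum>p\<in>posP n. 2 * (if odd (fst p + snd p + n) then (-1) ^ (fst p - 1) * ?f p else 0))"
  proof (rule sum.cong[OF refl])
    fix p assume p: "p \<in> posP n"
    obtain i j where pp: "p = (i, j)" by (cases p)
    have pr: "1 \<le> i" "j \<le> n" using p pp by (auto simp: posP_def)
    show "(-1) ^ (fst p - 1) * ?f p + (-1) ^ (n - snd p) * ?f p =
          2 * (if odd (fst p + snd p + n) then (-1) ^ (fst p - 1) * ?f p else 0)"
    proof (cases "odd (i + j + n)")
      case True
      then have "even (n - j) = even (i - 1)" using pr by presburger
      then have "((-1) ^ (n - j) :: ratfun) = (-1) ^ (i - 1)" by (simp add: minus_one_power_iff)
      then show ?thesis using True pp by simp
    next
      case False
      then have "even (n - j) = odd (i - 1)" using pr by presburger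
      then have "((-1) ^ (n - j) :: ratfun) = - ((-1) ^ (i - 1))" by (simp add: minus_one_power_iff)
      then show ?thesis using False pp by simp
    qed
  qed
  also have "\<dots> = 2 * (\<Sum>p\<in>posP n. (if odd (fst p + snd p + n) then (-1) ^ (fst p - 1) * Tminus (posP n) p I else 0))"
    by (rule sum_distrib_left[symmetric])
  finally show ?thesis .
qed

theorem theorem5p17:
  fixes n :: nat
  assumes "1 \<le> n"
  shows "qequiv (posP n)
           (\<lambda>I. (1/2) * (\<Sum>i = 1..n. (-1) ^ (i - 1) * Rbar n i I))
           (\<lambda>I. if even n then 0 else 1 / (qv + 1))"
proof -
  define c where "c p = (if odd (fst p + snd p + n) then (-1) ^ (fst p) / (qv + 1) else (0::ratfun))" for p
  show ?thesis unfolding qequiv_def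
  proof (intro exI ballI)
    fix I assume I: "I \<in> order_ideals (posP n)"
    define A where "A = (\<Sum>p\<in>posP n. (if odd (fst p + snd p + n) then (-1) ^ (fst p - 1) * Tminus (posP n) p I else 0))"
    define B where "B = (\<Sum>p\<in>posP n. (if odd (fst p + snd p + n) then (-1) ^ (fst p - 1) * Tplus (posP n) p I else 0))"
    have XA: "(\<Sum>i=1..n. (-1) ^ (i - 1) * Rbar n i I) = 2 * A" unfolding A_def by (rule X)
    have YAB: "A + B = (if odd n then 1 else 0)" unfolding A_def B_def by (rule Y[OF I])
    have nz: "qv + 1 \<noteq> 0" by (rule qv1_nz)
    have "(\<Sum>p\<in>posP n. c p * Tq (posP n) p I)
        = (\<Sum>p\<in>posP n. (qv * (if odd (fst p + snd p + n) then (-1) ^ (fst p - 1) * Tminus (posP n) p I else 0)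
             - (if odd (fst p + snd p + n) then (-1) ^ (fst p - 1) * Tplus (posP n) p I else 0)) / (qv + 1))"
    proof (rule sum.cong[OF refl])
      fix p assume p: "p \<in> posP n"
      have f1: "1 \<le> fst p" using p by (auto simp: posP_def)
      then have pw: "(-1) ^ fst p = - ((-1) ^ (fst p - 1) :: ratfun)"
        by (metis Suc_diff_1 less_le_trans zero_less_one power_Suc mult_minus1)
      show "c p * Tq (posP n) p I = (qv * (if odd (fst p + snd p + n) then (-1) ^ (fst p - 1) * Tminus (posP n) p I else 0)
             - (if odd (fst p + snd p + n) then (-1) ^ (fst p - 1) * Tplus (posP n) p I else 0)) / (qv + 1)"
      proof (cases "odd (fst p + snd p + n)")
        case True
        have nz': "qv + 1 \<noteq> 0" by (rule qv1_nz)
        show ?thesis unfolding c_def if_P[OF True] Tq_def pw using nz'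
          by (simp add: field_simps)
      next
        case False
        show ?thesis unfolding c_def if_not_P[OF False] by simp
      qed
    qed
    also have "\<dots> = (qv * A - B) / (qv + 1)"
      unfolding A_def B_def by (simp add: sum_divide_distrib[symmetric] sum_subtractf sum_distrib_left)
    also have "\<dots> = A - (if odd n then 1 else 0) / (qv + 1)"
    proof -
      have "B = (if odd n then 1 else 0) - A" using YAB by (simp add: algebra_simps)
      then show ?thesis using nz by (simp add: field_simps)
    qed
    finally have R: "(\<Sum>p\<in>posP n. c p * Tq (posP n) p I) = A - (if odd n then 1 else 0) / (qv + 1)" .
    show "1 / 2 * (\<Sum>i = 1..n. (-1) ^ (i - 1) * Rbar n i I) - (if even n then 0 else 1 / (qv + 1))
        = (\<Sum>p\<in>posP n. c p * Tq (posP n) p I)"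
      unfolding R XA by simp
  qed
qed


end
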